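(* For each user $n$, both $-\lim_{\rho\to\infty}\frac{\log\Pr(\rho (Y^{(n)})^2<\tilde\gamma_{OMA})}{\log\rho}$ and $-\lim_{\rho\to\infty}\frac{\log\Pr(\rho (Y^{(n)}_c)^2<\tilde\gamma_{OMA})}{\log\rho}$ exist and equal $m_sK$ (the OMA diversity order is $m_sK$ for both $b$-bit discrete, $b\ge2$, and continuous phase shifts).
   Context: Fix integers $N\ge1$, $K\ge1$, $b\ge2$ and a real $\beta\in(0,1]$. Let $m_G,m_g\ge 1/2$ with $m_G\neq m_g$; put $m_s=\min\{m_G,m_g\}$. For $n=1,\dots,N$ and $k=1,\dots,K$ let $G_k^n,g_k^n$ be mutually independent complex random variables such that $|G_k^n|$ has the Nakagami density $f(x)=\frac{2m^m}{\Gamma(m)}x^{2m-1}e^{-mx^2}$ ($x\ge0$) with $m=m_G$, and $|g_k^n|$ has this density with $m=m_g$. Let $\Delta=2\pi/2^b$. For each $n$ fix a constant $\tilde\theta_n\in[0,2\pi)$ and set $\bar\theta_k^n=\tilde\theta_n-\arg(G_k^ng_k^n)$, $\hat\theta_k^n=\Delta(\lfloor\bar\theta_k^n/\Delta\rfloor+\tfrac12)$, $\epsilon_k^n=\hat\theta_k^n-\bar\theta_k^n$. Define $Y^{(n)}=\beta\big|\sum_{k=1}^K|G_k^n||g_k^n|e^{j\epsilon_k^n}\big|$ and $Y_c^{(n)}=\beta\sum_{k=1}^K|G_k^n||g_k^n|$. $\tilde\gamma_{OMA}=2^{N\tilde R}-1$ for a target rate $\tilde R>0$; $\rho>0$ is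 the transmit SNR. *)

theory Defs
  imports "HOL-Probability.Probability"
begin

definition nakagami_pdf :: "real \<Rightarrow> real \<Rightarrow> real" where
  "nakagami_pdf m x =
     (if 0 \<le> x then 2 * m powr m / Gamma m * x powr (2 * m - 1) * exp (- m * x\<^sup>2) else 0)"

definition qstep :: "nat \<Rightarrow> real" where
  "qstep b = 2 * pi / 2 ^ b"

definition theta_bar :: "(nat \<Rightarrow> real) \<Rightarrow> (nat \<Rightarrow> nat \<Rightarrow> 'a \<Rightarrow> complex)
    \<Rightarrow> (nat \<Rightarrow> nat \<Rightarrow> 'a \<Rightarrow> complex) \<Rightarrow> nat \<Rightarrow> nat \<Rightarrow> 'a \<Rightarrow> real" where
  "theta_bar th G g n k \<omega> = th n - Arg (G n k \<omega> * g n k \<omega>)"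

definition theta_hat :: "nat \<Rightarrow> (nat \<Rightarrow> real) \<Rightarrow> (nat \<Rightarrow> nat \<Rightarrow> 'a \<Rightarrow> complex)
    \<Rightarrow> (nat \<Rightarrow> nat \<Rightarrow> 'a \<Rightarrow> complex) \<Rightarrow> nat \<Rightarrow> nat \<Rightarrow> 'a \<Rightarrow> real" where
  "theta_hat b th G g n k \<omega> =
     qstep b * (of_int \<lfloor>theta_bar th G g n k \<omega> / qstep b\<rfloor> + 1 / 2)"

definition phase_err :: "nat \<Rightarrow> (nat \<Rightarrow> real) \<Rightarrow> (nat \<Rightarrow> nat \<Rightarrow> 'a \<Rightarrow> complex)
    \<Rightarrow> (nat \<Rightarrow> nat \<Rightarrow> 'a \<Rightarrow> complex) \<Rightarrow> nat \<Rightarrow> nat \<Rightarrow> 'a \<Rightarrow> real" where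
  "phase_err b th G g n k \<omega> = theta_hat b th G g n k \<omega> - theta_bar th G g n k \<omega>"

definition Y_disc :: "real \<Rightarrow> nat \<Rightarrow> nat \<Rightarrow> (nat \<Rightarrow> real) \<Rightarrow> (nat \<Rightarrow> nat \<Rightarrow> 'a \<Rightarrow> complex)
    \<Rightarrow> (nat \<Rightarrow> nat \<Rightarrow> 'a \<Rightarrow> complex) \<Rightarrow> nat \<Rightarrow> 'a \<Rightarrow> real" where
  "Y_disc \<beta> K b th G g n \<omega> =
     \<beta> * cmod (\<Sum>k\<in>{1..K}. complex_of_real (cmod (G n k \<omega>) * cmod (g n k \<omega>))
                            * cis (phase_err b th G g n k \<omega>))"

definition Y_cont :: "real \<Rightarrow> nat \<Rightarrow> (nat \<Rightarrow> nat \<Rightarrow> 'a \<Rightarrow> complex)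
    \<Rightarrow> (nat \<Rightarrow> nat \<Rightarrow> 'a \<Rightarrow> complex) \<Rightarrow> nat \<Rightarrow> 'a \<Rightarrow> real" where
  "Y_cont \<beta> K G g n \<omega> = \<beta> * (\<Sum>k\<in>{1..K}. cmod (G n k \<omega>) * cmod (g n k \<omega>))"

definition gamma_OMA :: "nat \<Rightarrow> real \<Rightarrow> real" where
  "gamma_OMA N R = 2 powr (real N * R) - 1"

end

theory Submission
  imports Defs
begin

lemma nak_A_pos: "(m::real) > 0 \<Longrightarrow> 0 < 2 * m powr m / Gamma m"
  using Gamma_real_pos[of m] by simp

lemma nak_upper:
  assumes P: "prob_space M" and D: "distributed M lborel X (\<lambda>x. ennreal (nakagami_pdf m x))"
    and m: "m \<ge> 1/2" and t: "t \<ge> 0"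
  shows "measure M {\<omega>\<in>space M. X \<omega> < t} \<le> (2 * m powr m / Gamma m) * t powr (2*m)"
proof -
  interpret prob_space M by (rule P)
  define A where "A = 2 * m powr m / Gamma m"
  have A: "A > 0" unfolding A_def using m by (intro nak_A_pos) simp
  have set: "{\<omega>\<in>space M. X \<omega> < t} = X -` {..<t} \<inter> space M" by auto
  have "emeasure M {\<omega>\<in>space M. X \<omega> < t} = (\<integral>\<^sup>+x. ennreal (nakagami_pdf m x) * indicator {..<t} x \<partial>lborel)"
    unfolding set by (rule distributed_emeasure[OF D]) simp
  also have "\<dots> \<le> (\<integral>\<^sup>+x. ennreal (A * t powr (2*m-1)) * indicator {0..t} x \<partial>lborel)"
  proof (rule nn_integral_mono)
    fix x
    show "ennreal (nakagami_pdf m x) * indicator {..<t} x \<le> ennreal (A * t powr (2*m-1)) * indicator {0..t} x"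
    proof (cases "0 \<le> x \<and> x < t")
      case True
      have "nakagami_pdf m x = A * x powr (2*m-1) * exp (- m * x\<^sup>2)"
        using True unfolding nakagami_pdf_def A_def by simp
      also have "\<dots> \<le> A * x powr (2*m-1) * 1"
        using A True m by (intro mult_left_mono) auto
      also have "\<dots> \<le> A * t powr (2*m-1)"
        using A True m by (auto intro!: mult_left_mono powr_mono2)
      finally show ?thesis using True by (auto simp: indicator_def intro: ennreal_leI)
    next
      case False
      then show ?thesis by (auto simp: indicator_def nakagami_pdf_def)
    qed
  qed
  also have "\<dots> = ennreal (A * t powr (2*m-1)) * ennreal t"
    using t by (simp add: nn_integral_cmult_indicator)
  also have "\<dots> = ennreal (A * t powr (2*m))"
  proof -
    have "t powr (2*m-1) * t = t powr (2*m)"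
      using t by (cases "t = 0") (auto simp: powr_add[symmetric] powr_diff)
    then show ?thesis using A t by (simp add: ennreal_mult'[symmetric] mult.assoc)
  qed
  finally have "emeasure M {\<omega>\<in>space M. X \<omega> < t} \<le> ennreal (A * t powr (2*m))" .
  then show ?thesis unfolding A_def[symmetric]
    using emeasure_eq_measure A t by (simp add: ennreal_le_iff)
qed

lemma nak_lower:
  assumes P: "prob_space M" and D: "distributed M lborel X (\<lambda>x. ennreal (nakagami_pdf m x))"
    and m: "m \<ge> 1/2" and t: "0 < t" "t \<le> 1"
  shows "measure M {\<omega>\<in>space M. X \<omega> < t} \<ge> (2 * m powr m / Gamma m) * exp (- m) / 2 powr (2*m) * t powr (2*m)"
proof -
  interpret prob_space M by (rule P)
  define A where "A = 2 * m powr m / Gamma m"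
  have A: "A > 0" unfolding A_def using m by (intro nak_A_pos) simp
  have set: "{\<omega>\<in>space M. X \<omega> < t} = X -` {..<t} \<inter> space M" by auto
  have "ennreal (A * (t/2) powr (2*m-1) * exp (- m)) * ennreal (t/2) = (\<integral>\<^sup>+x. ennreal (A * (t/2) powr (2*m-1) * exp (- m)) * indicator {t/2..t} x \<partial>lborel)"
    using t by (simp add: nn_integral_cmult_indicator)
  also have "\<dots> \<le> (\<integral>\<^sup>+x. ennreal (nakagami_pdf m x) * indicator {..<t} x \<partial>lborel)"
  proof (rule nn_integral_mono_AE)
    have "AE x in lborel. x \<noteq> t" by (rule AE_lborel_singleton)
    then show "AE x in lborel. ennreal (A * (t/2) powr (2*m-1) * exp (- m)) * indicator {t/2..t} x \<le> ennreal (nakagami_pdf m x) * indicator {..<t} x"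
    proof (rule AE_mp, intro AE_I2 impI)
      fix x :: real assume xt: "x \<noteq> t"
      show "ennreal (A * (t/2) powr (2*m-1) * exp (- m)) * indicator {t/2..t} x \<le> ennreal (nakagami_pdf m x) * indicator {..<t} x"
      proof (cases "t/2 \<le> x \<and> x \<le> t")
        case True
        then have x: "t/2 \<le> x" "x < t" using xt by auto
        have "A * (t/2) powr (2*m-1) * exp (- m) \<le> A * x powr (2*m-1) * exp (- m * x\<^sup>2)"
        proof (rule mult_mono)
          show "A * (t/2) powr (2*m-1) \<le> A * x powr (2*m-1)"
            using A x t m by (intro mult_left_mono powr_mono2) auto
          have "x\<^sup>2 \<le> 1" using x t by (intro power_le_one) auto
          then show "exp (- m) \<le> exp (- m * x\<^sup>2)" using m
            by (simp add: mult_le_cancel_left1)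
        qed (use A in auto)
        also have "\<dots> = nakagami_pdf m x" using x t unfolding nakagami_pdf_def A_def by simp
        finally show ?thesis using x by (auto simp: indicator_def intro: ennreal_leI)
      qed (auto simp: indicator_def)
    qed
  qed
  also have "\<dots> = emeasure M {\<omega>\<in>space M. X \<omega> < t}"
    unfolding set by (rule distributed_emeasure[OF D, symmetric]) simp
  finally have le: "ennreal (A * (t/2) powr (2*m-1) * exp (- m) * (t/2)) \<le> emeasure M {\<omega>\<in>space M. X \<omega> < t}"
    using A t by (simp add: ennreal_mult'[symmetric])
  have "(t/2) powr (2*m-1) * (t/2) = (t/2) powr (2*m)"
    using t by (auto simp: powr_add[symmetric] powr_diff)
  also have "\<dots> = t powr (2*m) / 2 powr (2*m)" using t by (simp add: powr_divide)
  finally have h: "(t/2) powr (2*m-1) * (t/2) = t powr (2*m) / 2 powr (2*m)" .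
  have "A * (t/2) powr (2*m-1) * exp (- m) * (t/2) = A * exp (-m) * ((t/2) powr (2*m-1) * (t/2))"
    by (simp only: ac_simps)
  also have "\<dots> = A * exp (-m) * (t powr (2*m) / 2 powr (2*m))" by (simp only: h)
  also have "\<dots> = A * exp (- m) / 2 powr (2*m) * t powr (2*m)" by simp
  finally have eq: "A * (t/2) powr (2*m-1) * exp (- m) * (t/2) = A * exp (- m) / 2 powr (2*m) * t powr (2*m)" .
  show ?thesis using le unfolding eq A_def[symmetric]
    using emeasure_eq_measure by (simp add: ennreal_le_iff)
qed



lemma cover_one:
  fixes x y t :: real and J :: nat
  assumes x: "x \<ge> 0" and y: "y \<ge> 0" and xy: "x * y < t" and J: "(1/2)^J < t" and t: "t \<le> 1"
  defines "U \<equiv> \<lambda>j::nat. if j = Suc J then UNIV else {..<t * 2^j}"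
  defines "V \<equiv> \<lambda>j::nat. if j = 0 then UNIV else if j = Suc J then {..<(1/2::real)^J} else {..<2 * (1/2::real)^j}"
  shows "\<exists>j\<in>{0..Suc J}. x \<in> U j \<and> y \<in> V j"
proof (cases "y \<ge> 1")
  case True
  have "x \<le> x * y" using x True by (simp add: mult_le_cancel_left1)
  then have "x < t" using xy by simp
  then show ?thesis by (intro bexI[of _ 0]) (auto simp: U_def V_def)
next
  case ylt: False
  show ?thesis
  proof (cases "y < (1/2)^J")
    case True
    then show ?thesis by (intro bexI[of _ "Suc J"]) (auto simp: U_def V_def)
  next
    case False
    define P where "P = (\<lambda>j::nat. (1/2::real)^j \<le> y)"
    have "\<not> P 0" using ylt by (simp add: P_def)
    moreover have "P J" using False by (simp add: P_def)
    ultimately obtain n where n: "\<not> P n" "P (Suc n)" using exists_least_lemma[of P] by blast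
    have nJ: "n < J"
    proof (rule ccontr)
      assume "\<not> n < J"
      then have "(1/2::real)^n \<le> (1/2)^J" by (intro power_decreasing) auto
      moreover have "(1/2::real)^J \<le> y" using \<open>P J\<close> by (simp add: P_def)
      moreover have "\<not> (1/2::real)^n \<le> y" using n(1) by (simp add: P_def)
      ultimately show False by linarith
    qed
    have y1: "y < 2 * (1/2)^(Suc n)" using n(1) by (simp add: P_def)
    have y2: "(1/2)^(Suc n) \<le> y" using n(2) by (simp add: P_def)
    have "x * (1/2)^(Suc n) \<le> x * y" using mult_left_mono[OF y2 x] .
    then have "x * (1/2)^(Suc n) < t" using xy by simp
    then have "x < t * 2^(Suc n)" by (simp add: field_simps power_one_over)
    then show ?thesis using nJ y1 by (intro bexI[of _ "Suc n"]) (auto simp: U_def V_def)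
  qed
qed



lemma pow_ident:
  fixes t a c :: real and j :: nat
  assumes "t > 0"
  shows "(t*2^j) powr a * (2*(1/2)^j) powr c = 2 powr c * t powr a * (2 powr (a-c))^j"
proof -
  have e1: "(t*2^j) powr a = t powr a * 2 powr (real j * a)"
    using assms by (simp add: powr_mult powr_realpow[symmetric] powr_powr)
  have e2: "(2*(1/2::real)^j) powr c = 2 powr c * 2 powr (- (real j * c))"
  proof -
    have "(2*(1/2::real)^j) = 2 powr (1 - real j)"
      by (simp add: powr_diff power_one_over powr_realpow)
    then show ?thesis by (simp add: powr_powr powr_add[symmetric] algebra_simps)
  qed
  have e3: "(2 powr (a-c))^j = 2 powr (real j * a) * 2 powr (- (real j * c))"
    by (simp add: powr_power powr_add[symmetric] algebra_simps)
  show ?thesis unfolding e1 e2 e3 by simp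
qed



lemma term_sum_bound:
  fixes FX FY :: "real \<Rightarrow> real" and t a c A :: real and J :: nat
  assumes t: "0 < t" "t \<le> 1" and a: "0 < a" "a < c" and A: "A > 0" and J: "(1/2)^J < t"
    and FXnn: "\<And>s. 0 \<le> FX s" and FYnn: "\<And>s. 0 \<le> FY s"
    and FXu: "\<And>s. s \<ge> 0 \<Longrightarrow> FX s \<le> A * s powr a"
    and FYu: "\<And>s. s \<ge> 0 \<Longrightarrow> FY s \<le> A * s powr c"
  shows "(\<Sum>j\<in>{0..Suc J}. (if j = Suc J then 1 else FX (t*2^j)) *
            (if j = 0 then 1 else if j = Suc J then FY ((1/2)^J) else FY (2*(1/2)^j)))
         \<le> (2*A + A^2 * 2 powr c / (1 - 2 powr (a-c))) * t powr a"
proof -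
  define r where "r = (2::real) powr (a-c)"
  have "(2::real) powr (a-c) < 2 powr 0" using a by (intro powr_less_mono) auto
  then have r: "0 < r" "r < 1" by (auto simp: r_def)
  have pt: "(if j = Suc J then 1 else FX (t*2^j)) *
            (if j = 0 then 1 else if j = Suc J then FY ((1/2)^J) else FY (2*(1/2)^j))
         \<le> A * t powr a * (if j = 0 then 1 else 0) + A * t powr a * (if j = Suc J then 1 else 0)
           + A^2 * 2 powr c * t powr a * r^j" for j
  proof -
    have nn: "0 \<le> A^2 * 2 powr c * t powr a * r^j" "0 \<le> A * t powr a" using A r by auto
    consider "j = 0" | "j = Suc J" | "j \<noteq> 0" "j \<noteq> Suc J" by blast
    then show ?thesis
    proof cases
      case 1
      have h0: "0 \<le> A^2 * 2 powr c * t powr a" using A by simp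
      show ?thesis using 1 by simp (use FXu[of t] t h0 in linarith)
    next
      case 2
      have "FY ((1/2)^J) \<le> A * ((1/2)^J) powr c" by (rule FYu) simp
      also have "\<dots> \<le> A * t powr c" using A a J by (intro mult_left_mono powr_mono2) auto
      also have "\<dots> \<le> A * t powr a" using A a t by (intro mult_left_mono powr_mono') auto
      finally show ?thesis using 2 nn by simp
    next
      case 3
      have "FX (t*2^j) * FY (2*(1/2)^j) \<le> (A * (t*2^j) powr a) * (A * (2*(1/2)^j) powr c)"
        using t A by (intro mult_mono FXu FYu FXnn FYnn) auto
      also have "\<dots> = A^2 * ((t*2^j) powr a * (2*(1/2)^j) powr c)" by (simp add: power2_eq_square)
      also have "\<dots> = A^2 * 2 powr c * t powr a * r^j" unfolding pow_ident[OF t(1)] r_def by simp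
      finally show ?thesis using 3 nn by simp
    qed
  qed
  have "(\<Sum>j\<in>{0..Suc J}. (if j = Suc J then 1 else FX (t*2^j)) *
            (if j = 0 then 1 else if j = Suc J then FY ((1/2)^J) else FY (2*(1/2)^j)))
      \<le> (\<Sum>j\<in>{0..Suc J}. A * t powr a * (if j = 0 then 1 else 0) + A * t powr a * (if j = Suc J then 1 else 0)
           + A^2 * 2 powr c * t powr a * r^j)"
    by (rule sum_mono) (rule pt)
  also have "\<dots> = A * t powr a + A * t powr a + A^2 * 2 powr c * t powr a * (\<Sum>j\<in>{0..Suc J}. r^j)"
  proof -
    have f1: "(\<lambda>j. A * t powr a * (if j = 0 then 1 else 0)) = (\<lambda>j::nat. if j = 0 then A * t powr a else 0)" by auto
    have f2: "(\<lambda>j. A * t powr a * (if j = Suc J then 1 else 0)) = (\<lambda>j::nat. if j = Suc J then A * t powr a else 0)" by auto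
    show ?thesis unfolding sum.distrib f1 f2 sum_distrib_left[symmetric] by simp
  qed
  also have "\<dots> \<le> A * t powr a + A * t powr a + A^2 * 2 powr c * t powr a * (1 / (1 - r))"
  proof -
    have "(\<Sum>j\<in>{0..Suc J}. r^j) = (\<Sum>j<Suc (Suc J). r^j)" by (rule sum.cong) auto
    also have "\<dots> = (1 - r^(Suc (Suc J))) / (1 - r)" unfolding sum_gp_strict using r by simp
    also have "\<dots> \<le> 1 / (1 - r)" using r by (intro divide_right_mono) auto
    finally show ?thesis using A t by (intro add_left_mono mult_left_mono) auto
  qed
  also have "\<dots> = (2*A + A^2 * 2 powr c / (1 - 2 powr (a-c))) * t powr a"
    unfolding r_def by (simp add: algebra_simps)
  finally show ?thesis .
qed



lemma sumprod_bounds: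
  fixes M :: "'a measure" and X Y :: "nat \<Rightarrow> 'a \<Rightarrow> real" and K :: nat and a c A B :: real
  assumes P: "prob_space M" and K: "K \<ge> 1"
    and measX: "\<And>k. k \<in> {1..K} \<Longrightarrow> X k \<in> borel_measurable M"
    and measY: "\<And>k. k \<in> {1..K} \<Longrightarrow> Y k \<in> borel_measurable M"
    and nnX: "\<And>k \<omega>. k \<in> {1..K} \<Longrightarrow> \<omega> \<in> space M \<Longrightarrow> 0 \<le> X k \<omega>"
    and nnY: "\<And>k \<omega>. k \<in> {1..K} \<Longrightarrow> \<omega> \<in> space M \<Longrightarrow> 0 \<le> Y k \<omega>"
    and IND: "\<And>U V. (\<And>k. U k \<in> sets borel) \<Longrightarrow> (\<And>k. V k \<in> sets borel) \<Longrightarrow>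
       measure M (\<Inter>k\<in>{1..K}. {\<omega>\<in>space M. X k \<omega> \<in> U k \<and> Y k \<omega> \<in> V k})
       = (\<Prod>k\<in>{1..K}. measure M {\<omega>\<in>space M. X k \<omega> \<in> U k} * measure M {\<omega>\<in>space M. Y k \<omega> \<in> V k})"
    and XU: "\<And>k s. k \<in> {1..K} \<Longrightarrow> s \<ge> 0 \<Longrightarrow> measure M {\<omega>\<in>space M. X k \<omega> < s} \<le> A * s powr a"
    and YU: "\<And>k s. k \<in> {1..K} \<Longrightarrow> s \<ge> 0 \<Longrightarrow> measure M {\<omega>\<in>space M. Y k \<omega> < s} \<le> A * s powr c"
    and XL: "\<And>k s. k \<in> {1..K} \<Longrightarrow> 0 < s \<Longrightarrow> s \<le> 1 \<Longrightarrow> B * s powr a \<le> measure M {\<omega>\<in>space M. X k \<omega> < s}"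
    and YL: "\<And>k. k \<in> {1..K} \<Longrightarrow> B \<le> measure M {\<omega>\<in>space M. Y k \<omega> < 1}"
    and a: "0 < a" "a < c" and A: "A > 0" and B: "B > 0"
  shows "\<exists>c1 c2. 0 < c1 \<and> 0 < c2 \<and> (\<forall>t. 0 < t \<longrightarrow> t \<le> 1 \<longrightarrow>
     c1 * (t powr a)^K \<le> measure M {\<omega>\<in>space M. (\<Sum>k\<in>{1..K}. X k \<omega> * Y k \<omega>) < t} \<and>
     measure M {\<omega>\<in>space M. (\<Sum>k\<in>{1..K}. X k \<omega> * Y k \<omega>) < t} \<le> c2 * (t powr a)^K)"
proof -
  interpret prob_space M by (rule P)
  define S where "S = (\<lambda>\<omega>. \<Sum>k\<in>{1..K}. X k \<omega> * Y k \<omega>)"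
  have Smeas: "S \<in> borel_measurable M" unfolding S_def using measX measY by measurable
  have Sset: "{\<omega>\<in>space M. S \<omega> < t} \<in> sets M" for t using Smeas by measurable
  have setX: "{\<omega>\<in>space M. X k \<omega> \<in> U} \<in> sets M" if "k \<in> {1..K}" "U \<in> sets borel" for k U
    using measurable_sets[OF measX[OF that(1)] that(2)] by (simp add: vimage_def Int_def conj_commute)
  have setY: "{\<omega>\<in>space M. Y k \<omega> \<in> U} \<in> sets M" if "k \<in> {1..K}" "U \<in> sets borel" for k U
    using measurable_sets[OF measY[OF that(1)] that(2)] by (simp add: vimage_def Int_def conj_commute)
  have Kne: "{1..K} \<noteq> {}" using K by auto
  define C where "C = 2*A + A^2 * 2 powr c / (1 - 2 powr (a-c))"
  have "(2::real) powr (a-c) < 2 powr 0" using a by (intro powr_less_mono) auto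
  then have C: "C > 0" unfolding C_def using A by (auto intro!: add_pos_nonneg)
  define c1 where "c1 = (B * B / real K powr a)^K"
  have c1: "c1 > 0" unfolding c1_def using B K by auto
  have lower: "c1 * (t powr a)^K \<le> measure M {\<omega>\<in>space M. S \<omega> < t}" if t: "0 < t" "t \<le> 1" for t
  proof -
    define L where "L = (\<Inter>k\<in>{1..K}. {\<omega>\<in>space M. X k \<omega> \<in> {..<t/K} \<and> Y k \<omega> \<in> {..<1}})"
    have "c1 * (t powr a)^K = (\<Prod>k\<in>{1..K}. B * (t/K) powr a * B)"
    proof -
      have "B * (t/K) powr a * B = B * B / real K powr a * t powr a"
        using t K by (simp add: powr_divide)
      then show ?thesis unfolding c1_def by (simp add: power_mult_distrib[symmetric])
    qed
    also have "\<dots> \<le> (\<Prod>k\<in>{1..K}. measure M {\<omega>\<in>space M. X k \<omega> \<in> {..<t/K}} * measure M {\<omega>\<in>space M. Y k \<omega> \<in> {..<1}})"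
    proof (rule prod_mono, safe)
      fix k assume k: "k \<in> {1..K}"
      have tk: "0 < t/K" "t/K \<le> 1" using t K by (auto simp: field_simps)
      show "0 \<le> B * (t/K) powr a * B" using B by simp
      show "B * (t/K) powr a * B \<le> measure M {\<omega>\<in>space M. X k \<omega> \<in> {..<t/K}} * measure M {\<omega>\<in>space M. Y k \<omega> \<in> {..<1}}"
        using XL[OF k tk] YL[OF k] B by (intro mult_mono) auto
    qed
    also have "\<dots> = measure M L" unfolding L_def by (rule IND[symmetric]) auto
    also have "\<dots> \<le> measure M {\<omega>\<in>space M. S \<omega> < t}"
    proof (rule finite_measure_mono[OF _ Sset])
      show "L \<subseteq> {\<omega>\<in>space M. S \<omega> < t}"
      proof
        fix \<omega> assume w: "\<omega> \<in> L"
        then have wM: "\<omega> \<in> space M" using K unfolding L_def by auto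
        have "S \<omega> < (\<Sum>k\<in>{1..K}. t / K)" unfolding S_def
        proof (rule sum_strict_mono[OF _ Kne])
          fix k assume k: "k \<in> {1..K}"
          then have "X k \<omega> < t/K" "Y k \<omega> < 1" using w unfolding L_def by auto
          moreover have "X k \<omega> * Y k \<omega> \<le> X k \<omega>"
            using nnX[OF k wM] nnY[OF k wM] \<open>Y k \<omega> < 1\<close> by (simp add: mult_left_le)
          ultimately show "X k \<omega> * Y k \<omega> < t / K" by linarith
        qed simp
        also have "\<dots> = t" using K by simp
        finally show "\<omega> \<in> {\<omega>\<in>space M. S \<omega> < t}" using wM by simp
      qed
    qed
    finally show ?thesis .
  qed
  have upper: "measure M {\<omega>\<in>space M. S \<omega> < t} \<le> C^K * (t powr a)^K" if t: "0 < t" "t \<le> 1" for t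
  proof -
    obtain J where J: "(1/2::real)^J < t" using real_arch_pow_inv[OF t(1), of "1/2"] by auto
    define U where "U = (\<lambda>j::nat. if j = Suc J then UNIV else {..<t * 2^j})"
    define V where "V = (\<lambda>j::nat. if j = 0 then UNIV else if j = Suc J then {..<(1/2::real)^J} else {..<2 * (1/2::real)^j})"
    have Ub: "U j \<in> sets borel" for j unfolding U_def by auto
    have Vb: "V j \<in> sets borel" for j unfolding V_def by auto
    define E where "E = (\<lambda>\<phi>. \<Inter>k\<in>{1..K}. {\<omega>\<in>space M. X k \<omega> \<in> U (\<phi> k) \<and> Y k \<omega> \<in> V (\<phi> k)})"
    define PI where "PI = PiE {1..K} (\<lambda>_. {0..Suc J})"
    have finPI: "finite PI" unfolding PI_def by (intro finite_PiE) auto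
    have EK: "{\<omega>\<in>space M. X k \<omega> \<in> U j \<and> Y k \<omega> \<in> V j} \<in> sets M" if "k \<in> {1..K}" for k j
    proof -
      have "{\<omega>\<in>space M. X k \<omega> \<in> U j \<and> Y k \<omega> \<in> V j} = {\<omega>\<in>space M. X k \<omega> \<in> U j} \<inter> {\<omega>\<in>space M. Y k \<omega> \<in> V j}" by auto
      then show ?thesis using setX[OF that Ub] setY[OF that Vb] by simp
    qed
    have Esets: "E \<phi> \<in> sets M" for \<phi>
      unfolding E_def using Kne EK by (intro sets.finite_INT) auto
    have cover: "{\<omega>\<in>space M. S \<omega> < t} \<subseteq> (\<Union>\<phi>\<in>PI. E \<phi>)"
    proof
      fix \<omega> assume "\<omega> \<in> {\<omega>\<in>space M. S \<omega> < t}"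
      then have wM: "\<omega> \<in> space M" and St: "S \<omega> < t" by auto
      have ex: "\<exists>j. j \<in> {0..Suc J} \<and> X k \<omega> \<in> U j \<and> Y k \<omega> \<in> V j" if k: "k \<in> {1..K}" for k
      proof -
        have "X k \<omega> * Y k \<omega> \<le> S \<omega>" unfolding S_def
          using k nnX[OF _ wM] nnY[OF _ wM]
          by (intro member_le_sum) auto
        then have "X k \<omega> * Y k \<omega> < t" using St by simp
        from cover_one[OF nnX[OF k wM] nnY[OF k wM] this J t(2)]
        show ?thesis unfolding U_def V_def by blast
      qed
      define \<phi> where "\<phi> = restrict (\<lambda>k. SOME j. j \<in> {0..Suc J} \<and> X k \<omega> \<in> U j \<and> Y k \<omega> \<in> V j) {1..K}"
      have \<phi>: "\<phi> k \<in> {0..Suc J} \<and> X k \<omega> \<in> U (\<phi> k) \<and> Y k \<omega> \<in> V (\<phi> k)" if k: "k \<in> {1..K}" for k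
        using someI_ex[OF ex[OF k]] k unfolding \<phi>_def by simp
      have "\<phi> \<in> PI" unfolding PI_def \<phi>_def using \<phi> by (auto simp: \<phi>_def)
      moreover have "\<omega> \<in> E \<phi>" unfolding E_def using \<phi> wM by auto
      ultimately show "\<omega> \<in> (\<Union>\<phi>\<in>PI. E \<phi>)" by blast
    qed
    define f where "f = (\<lambda>k j. measure M {\<omega>\<in>space M. X k \<omega> \<in> U j} * measure M {\<omega>\<in>space M. Y k \<omega> \<in> V j})"
    have "measure M {\<omega>\<in>space M. S \<omega> < t} \<le> measure M (\<Union>\<phi>\<in>PI. E \<phi>)"
      using cover finPI Esets by (intro finite_measure_mono) auto
    also have "\<dots> \<le> (\<Sum>\<phi>\<in>PI. measure M (E \<phi>))"
      using finPI Esets by (intro finite_measure_subadditive_finite) auto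
    also have "\<dots> = (\<Sum>\<phi>\<in>PI. \<Prod>k\<in>{1..K}. f k (\<phi> k))"
      unfolding E_def f_def by (intro sum.cong refl IND Ub Vb)
    also have "\<dots> = (\<Prod>k\<in>{1..K}. \<Sum>j\<in>{0..Suc J}. f k j)"
      unfolding PI_def by (rule prod_sum_PiE[symmetric]) auto
    also have "\<dots> \<le> (\<Prod>k\<in>{1..K}. C * t powr a)"
    proof (rule prod_mono, safe)
      fix k assume k: "k \<in> {1..K}"
      show "0 \<le> (\<Sum>j\<in>{0..Suc J}. f k j)" unfolding f_def by (intro sum_nonneg) auto
      have fk: "f k j = (if j = Suc J then 1 else measure M {\<omega>\<in>space M. X k \<omega> < t*2^j}) *
            (if j = 0 then 1 else if j = Suc J then measure M {\<omega>\<in>space M. Y k \<omega> < (1/2)^J}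
               else measure M {\<omega>\<in>space M. Y k \<omega> < 2*(1/2)^j})" for j
        unfolding f_def U_def V_def by (simp add: prob_space)
      show "(\<Sum>j\<in>{0..Suc J}. f k j) \<le> C * t powr a"
        unfolding fk C_def
        by (rule term_sum_bound[where FX = "\<lambda>s. measure M {\<omega>\<in>space M. X k \<omega> < s}" and FY = "\<lambda>s. measure M {\<omega>\<in>space M. Y k \<omega> < s}", OF t a A J]) (auto intro: XU[OF k] YU[OF k])
    qed
    also have "\<dots> = C^K * (t powr a)^K" by (simp add: power_mult_distrib)
    finally show ?thesis .
  qed
  show ?thesis
    using lower upper c1 C unfolding S_def by (intro exI[of _ c1] exI[of _ "C^K"]) auto
qed



lemma ind_factor:
  fixes M :: "'a measure" and G g :: "nat \<Rightarrow> nat \<Rightarrow> 'a \<Rightarrow> complex"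
  assumes P: "prob_space M"
    and ind: "prob_space.indep_vars M (\<lambda>_. borel)
           (\<lambda>x. case x of Inl (i, k) \<Rightarrow> G i k | Inr (i, k) \<Rightarrow> g i k)
           (({1..N} \<times> {1..K}) <+> ({1..N} \<times> {1..K}))"
    and n: "n \<in> {1..N}" and K: "K \<ge> 1"
    and U: "\<And>k. U k \<in> sets borel" and V: "\<And>k. V k \<in> sets borel"
  shows "measure M (\<Inter>k\<in>{1..K}. {\<omega>\<in>space M. cmod (G n k \<omega>) \<in> U k \<and> cmod (g n k \<omega>) \<in> V k})
       = (\<Prod>k\<in>{1..K}. measure M {\<omega>\<in>space M. cmod (G n k \<omega>) \<in> U k} * measure M {\<omega>\<in>space M. cmod (g n k \<omega>) \<in> V k})"
proof -
  interpret prob_space M by (rule P)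
  define W where "W = (\<lambda>x. case x of Inl (i, k) \<Rightarrow> G i k | Inr (i, k) \<Rightarrow> g i k)"
  define I where "I = (({1..N} \<times> {1..K}) <+> ({1..N} \<times> {1..K}))"
  have iset: "indep_sets (\<lambda>i. {W i -` A \<inter> space M | A. A \<in> sets borel}) I"
    using ind unfolding indep_vars_def2 W_def I_def by auto
  define J where "J = (({n} \<times> {1..K}) <+> ({n} \<times> {1..K}))"
  have JI: "J \<subseteq> I" using n unfolding J_def I_def by auto
  have Jne: "J \<noteq> {}" using K unfolding J_def by auto
  have Jfin: "finite J" unfolding J_def by auto
  define AS where "AS = (\<lambda>j. case j of Inl (i, k) \<Rightarrow> {\<omega>\<in>space M. cmod (G i k \<omega>) \<in> U k}
                                | Inr (i, k) \<Rightarrow> {\<omega>\<in>space M. cmod (g i k \<omega>) \<in> V k})"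
  have cm: "(\<lambda>z::complex. cmod z) -` S \<in> sets borel" if "S \<in> sets borel" for S
    using measurable_sets[OF borel_measurable_norm that] by simp
  have inF: "\<forall>j\<in>J. AS j \<in> {W j -` A \<inter> space M | A. A \<in> sets borel}"
  proof
    fix j assume "j \<in> J"
    show "AS j \<in> {W j -` A \<inter> space M | A. A \<in> sets borel}"
    proof (cases j)
      case (Inl p)
      obtain i k where p: "p = (i, k)" by (cases p)
      show ?thesis unfolding Inl p AS_def W_def
        by (intro CollectI exI[of _ "cmod -` U k"] conjI cm U) auto
    next
      case (Inr p)
      obtain i k where p: "p = (i, k)" by (cases p)
      show ?thesis unfolding Inr p AS_def W_def
        by (intro CollectI exI[of _ "cmod -` V k"] conjI cm V) auto
    qed
  qed
  have eq1: "prob (\<Inter>j\<in>J. AS j) = (\<Prod>j\<in>J. prob (AS j))"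
    by (rule indep_setsD[OF iset JI Jne Jfin inF])
  have eq2: "(\<Inter>j\<in>J. AS j) = (\<Inter>k\<in>{1..K}. {\<omega>\<in>space M. cmod (G n k \<omega>) \<in> U k \<and> cmod (g n k \<omega>) \<in> V k})"
  proof (rule set_eqI, rule iffI)
    fix x assume x: "x \<in> (\<Inter>j\<in>J. AS j)"
    show "x \<in> (\<Inter>k\<in>{1..K}. {\<omega>\<in>space M. cmod (G n k \<omega>) \<in> U k \<and> cmod (g n k \<omega>) \<in> V k})"
    proof (rule INT_I)
      fix k assume k: "k \<in> {1..K}"
      have "Inl (n, k) \<in> J" "Inr (n, k) \<in> J" using k unfolding J_def by auto
      then have "x \<in> AS (Inl (n, k))" "x \<in> AS (Inr (n, k))" using x by auto
      then show "x \<in> {\<omega>\<in>space M. cmod (G n k \<omega>) \<in> U k \<and> cmod (g n k \<omega>) \<in> V k}"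
        unfolding AS_def by simp
    qed
  next
    fix x assume x: "x \<in> (\<Inter>k\<in>{1..K}. {\<omega>\<in>space M. cmod (G n k \<omega>) \<in> U k \<and> cmod (g n k \<omega>) \<in> V k})"
    show "x \<in> (\<Inter>j\<in>J. AS j)"
    proof (rule INT_I)
      fix j assume "j \<in> J"
      then obtain k where k: "k \<in> {1..K}" and j: "j = Inl (n, k) \<or> j = Inr (n, k)"
        unfolding J_def by auto
      show "x \<in> AS j" using x k j unfolding AS_def by auto
    qed
  qed
  have img: "{n} \<times> {1..K} = (\<lambda>k. (n, k)) ` {1..K}" by auto
  have inj: "inj_on (\<lambda>k. (n, k)) {1..K}" by (auto simp: inj_on_def)
  have eq3: "(\<Prod>j\<in>J. prob (AS j)) = (\<Prod>k\<in>{1..K}. prob {\<omega>\<in>space M. cmod (G n k \<omega>) \<in> U k}) *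
     (\<Prod>k\<in>{1..K}. prob {\<omega>\<in>space M. cmod (g n k \<omega>) \<in> V k})"
  proof -
    have fin: "finite ({n} \<times> {1..K})" by auto
    have "(\<Prod>j\<in>J. prob (AS j)) = (\<Prod>j\<in>{n} \<times> {1..K}. prob (AS (Inl j))) * (\<Prod>j\<in>{n} \<times> {1..K}. prob (AS (Inr j)))"
      unfolding J_def by (subst prod.Plus[OF fin fin]) (simp add: o_def)
    also have "\<dots> = (\<Prod>k\<in>{1..K}. prob (AS (Inl (n,k)))) * (\<Prod>k\<in>{1..K}. prob (AS (Inr (n,k))))"
      unfolding img by (simp only: prod.reindex[OF inj] o_def)
    finally show ?thesis by (simp add: AS_def)
  qed
  show ?thesis using eq1 unfolding eq2 eq3 by (simp add: prod.distrib)
qed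



lemma borel_measurable_Arg[measurable]: "Arg \<in> borel_measurable borel"
proof -
  define A :: "complex set" where "A = - \<real>\<^sub>\<le>\<^sub>0"
  have eq: "Arg = (\<lambda>z. if z \<in> A then Arg z else (if z = 0 then 0 else pi))"
  proof
    fix z :: complex
    show "Arg z = (if z \<in> A then Arg z else (if z = 0 then 0 else pi))"
    proof (cases "z \<in> A")
      case False
      then have z: "Re z \<le> 0" "Im z = 0" unfolding A_def by (auto simp: complex_nonpos_Reals_iff)
      show ?thesis
      proof (cases "z = 0")
        case True then show ?thesis using False by (simp add: Arg_zero)
      next
        case nz: False
        then have "Re z < 0" using z complex_eq_iff[of z 0] by auto
        then show ?thesis using False nz z by (simp add: Arg_eq_pi)
      qed
    qed simp
  qed
  have "open A" unfolding A_def by auto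
  then have Ab: "{x \<in> space borel. x \<in> A} \<in> sets borel" by (simp add: borel_open)
  have f: "Arg \<in> borel_measurable (restrict_space borel {x. x \<in> A})"
  proof -
    have e: "{x. x \<in> A} = - \<real>\<^sub>\<le>\<^sub>0" unfolding A_def by auto
    show ?thesis by (subst e) (rule borel_measurable_continuous_on_restrict[OF continuous_on_Arg])
  qed
  have g: "(\<lambda>z::complex. if z = 0 then 0 else pi) \<in> borel_measurable (restrict_space borel {x. x \<notin> A})"
    by (intro measurable_restrict_space1) measurable
  have "(\<lambda>z. if z \<in> A then Arg z else (if z = 0 then 0 else pi)) \<in> borel_measurable borel"
    using measurable_If_restrict_space_iff[OF Ab, of Arg "\<lambda>z. if z = 0 then 0 else pi"] f g by simp
  then show ?thesis by (subst eq)
qed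

lemma borel_measurable_cis[measurable]: "cis \<in> borel_measurable borel"
  by (intro borel_measurable_continuous_onI continuous_intros)

lemma Y_disc_measurable:
  assumes "\<And>k. k \<in> {1..K} \<Longrightarrow> G n k \<in> borel_measurable M" "\<And>k. k \<in> {1..K} \<Longrightarrow> g n k \<in> borel_measurable M"
  shows "Y_disc \<beta> K b th G g n \<in> borel_measurable M"
  unfolding Y_disc_def[abs_def] phase_err_def theta_hat_def theta_bar_def
  using assms by measurable

lemma phase_err_bound:
  assumes b: "b \<ge> 2"
  shows "\<bar>phase_err b th G g n k \<omega>\<bar> \<le> pi / 4"
proof -
  define q where "q = qstep b"
  have q: "q > 0" unfolding q_def qstep_def by simp
  define x where "x = theta_bar th G g n k \<omega>"
  define y where "y = x / q"
  have xy: "x = q * y" using q unfolding y_def by simp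
  have pe: "phase_err b th G g n k \<omega> = q * (of_int \<lfloor>y\<rfloor> + 1/2 - y)"
    unfolding phase_err_def theta_hat_def q_def[symmetric] x_def[symmetric] y_def[symmetric]
    using xy by (simp add: algebra_simps)
  have fl: "of_int \<lfloor>y\<rfloor> \<le> y" "y < of_int \<lfloor>y\<rfloor> + 1" by linarith+
  have "\<bar>of_int \<lfloor>y\<rfloor> + 1/2 - y\<bar> \<le> 1/2" using fl by linarith
  then have "\<bar>phase_err b th G g n k \<omega>\<bar> \<le> q * (1/2)" unfolding pe using q
    by (simp add: abs_mult)
  also have "q * (1/2) \<le> pi / 4"
  proof -
    have "(4::real) \<le> 2^b" using power_increasing[OF b, of "2::real"] by simp
    then have "2 * pi / 2^b \<le> 2 * pi / 4" using pi_gt_zero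
      by (intro divide_left_mono) auto
    then show ?thesis unfolding q_def qstep_def by (simp add: ac_simps)
  qed
  finally show ?thesis .
qed

lemma sandwich:
  fixes w e :: "nat \<Rightarrow> real"
  assumes w: "\<And>k. k \<in> A \<Longrightarrow> 0 \<le> w k" and e: "\<And>k. k \<in> A \<Longrightarrow> \<bar>e k\<bar> \<le> pi/4"
  shows "sqrt 2 / 2 * (\<Sum>k\<in>A. w k) \<le> cmod (\<Sum>k\<in>A. complex_of_real (w k) * cis (e k))"
    and "cmod (\<Sum>k\<in>A. complex_of_real (w k) * cis (e k)) \<le> (\<Sum>k\<in>A. w k)"
proof -
  have "sqrt 2 / 2 * (\<Sum>k\<in>A. w k) = (\<Sum>k\<in>A. w k * cos (pi/4))"
    unfolding sum_distrib_right[symmetric] by (simp add: mult.commute cos_45)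
  also have "\<dots> \<le> (\<Sum>k\<in>A. w k * cos (e k))"
  proof (rule sum_mono)
    fix k assume k: "k \<in> A"
    have "cos (pi/4) \<le> cos \<bar>e k\<bar>" using e[OF k] by (intro cos_monotone_0_pi_le) auto
    then show "w k * cos (pi/4) \<le> w k * cos (e k)" using w[OF k] by (simp add: mult_left_mono)
  qed
  also have "\<dots> = Re (\<Sum>k\<in>A. complex_of_real (w k) * cis (e k))" by simp
  also have "\<dots> \<le> cmod (\<Sum>k\<in>A. complex_of_real (w k) * cis (e k))" by (rule complex_Re_le_cmod)
  finally show "sqrt 2 / 2 * (\<Sum>k\<in>A. w k) \<le> cmod (\<Sum>k\<in>A. complex_of_real (w k) * cis (e k))" .
  have "cmod (\<Sum>k\<in>A. complex_of_real (w k) * cis (e k)) \<le> (\<Sum>k\<in>A. cmod (complex_of_real (w k) * cis (e k)))"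
    by (rule norm_sum)
  also have "\<dots> = (\<Sum>k\<in>A. w k)" using w by (intro sum.cong) (auto simp: norm_mult)
  finally show "cmod (\<Sum>k\<in>A. complex_of_real (w k) * cis (e k)) \<le> (\<Sum>k\<in>A. w k)" .
qed



lemma lim_const_div_ln: "((\<lambda>\<rho>::real. e - c / ln \<rho>) \<longlongrightarrow> e) at_top"
proof -
  have "((\<lambda>\<rho>::real. c / ln \<rho>) \<longlongrightarrow> 0) at_top"
    by (intro tendsto_divide_0[OF tendsto_const] filterlim_at_top_imp_at_infinity ln_at_top)
  from tendsto_diff[OF tendsto_const this, of e] show ?thesis by simp
qed

lemma diversity_limit:
  fixes p :: "real \<Rightarrow> real" and e La Lb :: real
  assumes L: "La > 0" "Lb > 0"
    and ev: "eventually (\<lambda>\<rho>. La * \<rho> powr (-e) \<le> p \<rho> \<and> p \<rho> \<le> Lb * \<rho> powr (-e)) at_top"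
  shows "((\<lambda>\<rho>. - ln (p \<rho>) / ln \<rho>) \<longlongrightarrow> e) at_top"
proof (rule tendsto_sandwich[OF _ _ lim_const_div_ln[of e "ln Lb"] lim_const_div_ln[of e "ln La"]])
  have ev2: "eventually (\<lambda>\<rho>::real. \<rho> > 1) at_top" by (rule eventually_gt_at_top)
  have both: "eventually (\<lambda>\<rho>. (La * \<rho> powr (-e) \<le> p \<rho> \<and> p \<rho> \<le> Lb * \<rho> powr (-e)) \<and> \<rho> > 1) at_top"
    using ev ev2 by (rule eventually_conj)
  show "eventually (\<lambda>\<rho>. e - ln Lb / ln \<rho> \<le> - ln (p \<rho>) / ln \<rho>) at_top"
    using both
  proof (rule eventually_mono)
    fix \<rho> :: real assume h: "(La * \<rho> powr (-e) \<le> p \<rho> \<and> p \<rho> \<le> Lb * \<rho> powr (-e)) \<and> \<rho> > 1"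
    have lpos: "ln \<rho> > 0" using h by simp
    have pp: "p \<rho> > 0" using h L by (smt (verit) mult_pos_pos powr_gt_zero)
    have "ln (p \<rho>) \<le> ln (Lb * \<rho> powr (-e))" using h pp by (subst ln_le_cancel_iff) auto
    also have "\<dots> = ln Lb - e * ln \<rho>" using L h by (simp add: ln_mult ln_powr)
    finally have "e * ln \<rho> - ln Lb \<le> - ln (p \<rho>)" by linarith
    then have "(e * ln \<rho> - ln Lb) / ln \<rho> \<le> - ln (p \<rho>) / ln \<rho>" using lpos by (intro divide_right_mono) auto
    then show "e - ln Lb / ln \<rho> \<le> - ln (p \<rho>) / ln \<rho>" using lpos by (simp add: diff_divide_distrib)
  qed
  show "eventually (\<lambda>\<rho>. - ln (p \<rho>) / ln \<rho> \<le> e - ln La / ln \<rho>) at_top"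
    using both
  proof (rule eventually_mono)
    fix \<rho> :: real assume h: "(La * \<rho> powr (-e) \<le> p \<rho> \<and> p \<rho> \<le> Lb * \<rho> powr (-e)) \<and> \<rho> > 1"
    have lpos: "ln \<rho> > 0" using h by simp
    have lp: "La * \<rho> powr (-e) > 0" using L h by simp
    have "ln La - e * ln \<rho> = ln (La * \<rho> powr (-e))" using L h by (simp add: ln_mult ln_powr)
    also have "\<dots> \<le> ln (p \<rho>)" using h lp by (subst ln_le_cancel_iff) auto
    finally have "- ln (p \<rho>) \<le> e * ln \<rho> - ln La" by linarith
    then have "- ln (p \<rho>) / ln \<rho> \<le> (e * ln \<rho> - ln La) / ln \<rho>" using lpos by (intro divide_right_mono) auto
    then show "- ln (p \<rho>) / ln \<rho> \<le> e - ln La / ln \<rho>" using lpos by (simp add: diff_divide_distrib)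
  qed
qed



lemma core:
  fixes M :: "'a measure" and X Y :: "nat \<Rightarrow> 'a \<Rightarrow> real" and K :: nat and mX mY :: real
  assumes P: "prob_space M" and K: "K \<ge> 1" and mX: "mX \<ge> 1/2" and mXY: "mX < mY"
    and measX: "\<And>k. k \<in> {1..K} \<Longrightarrow> X k \<in> borel_measurable M"
    and measY: "\<And>k. k \<in> {1..K} \<Longrightarrow> Y k \<in> borel_measurable M"
    and nnX: "\<And>k \<omega>. k \<in> {1..K} \<Longrightarrow> \<omega> \<in> space M \<Longrightarrow> 0 \<le> X k \<omega>"
    and nnY: "\<And>k \<omega>. k \<in> {1..K} \<Longrightarrow> \<omega> \<in> space M \<Longrightarrow> 0 \<le> Y k \<omega>"
    and IND: "\<And>U V. (\<And>k. U k \<in> sets borel) \<Longrightarrow> (\<And>k. V k \<in> sets borel) \<Longrightarrow>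
       measure M (\<Inter>k\<in>{1..K}. {\<omega>\<in>space M. X k \<omega> \<in> U k \<and> Y k \<omega> \<in> V k})
       = (\<Prod>k\<in>{1..K}. measure M {\<omega>\<in>space M. X k \<omega> \<in> U k} * measure M {\<omega>\<in>space M. Y k \<omega> \<in> V k})"
    and DX: "\<And>k. k \<in> {1..K} \<Longrightarrow> distributed M lborel (X k) (\<lambda>x. ennreal (nakagami_pdf mX x))"
    and DY: "\<And>k. k \<in> {1..K} \<Longrightarrow> distributed M lborel (Y k) (\<lambda>x. ennreal (nakagami_pdf mY x))"
  shows "\<exists>c1 c2. 0 < c1 \<and> 0 < c2 \<and> (\<forall>t. 0 < t \<longrightarrow> t \<le> 1 \<longrightarrow>
     c1 * (t powr (2*mX))^K \<le> measure M {\<omega>\<in>space M. (\<Sum>k\<in>{1..K}. X k \<omega> * Y k \<omega>) < t} \<and>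
     measure M {\<omega>\<in>space M. (\<Sum>k\<in>{1..K}. X k \<omega> * Y k \<omega>) < t} \<le> c2 * (t powr (2*mX))^K)"
proof -
  have mY: "mY \<ge> 1/2" using mX mXY by simp
  define AX where "AX = 2 * mX powr mX / Gamma mX"
  define AY where "AY = 2 * mY powr mY / Gamma mY"
  have AX: "AX > 0" unfolding AX_def using mX by (intro nak_A_pos) simp
  have AY: "AY > 0" unfolding AY_def using mY by (intro nak_A_pos) simp
  define BX where "BX = AX * exp (- mX) / 2 powr (2*mX)"
  define BY where "BY = AY * exp (- mY) / 2 powr (2*mY)"
  have BX: "BX > 0" unfolding BX_def using AX by simp
  have BY: "BY > 0" unfolding BY_def using AY by simp
  show ?thesis
  proof (rule sumprod_bounds[OF P K measX measY nnX nnY IND, where A = "max AX AY" and B = "min BX BY"])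
    fix k s assume k: "k \<in> {1..K}" and s: "(0::real) \<le> s"
    have "measure M {\<omega>\<in>space M. X k \<omega> < s} \<le> AX * s powr (2*mX)"
      using nak_upper[OF P DX[OF k] mX s] unfolding AX_def .
    also have "\<dots> \<le> max AX AY * s powr (2*mX)" by (intro mult_right_mono) auto
    finally show "measure M {\<omega>\<in>space M. X k \<omega> < s} \<le> max AX AY * s powr (2*mX)" .
  next
    fix k s assume k: "k \<in> {1..K}" and s: "(0::real) \<le> s"
    have "measure M {\<omega>\<in>space M. Y k \<omega> < s} \<le> AY * s powr (2*mY)"
      using nak_upper[OF P DY[OF k] mY s] unfolding AY_def .
    also have "\<dots> \<le> max AX AY * s powr (2*mY)" by (intro mult_right_mono) auto
    finally show "measure M {\<omega>\<in>space M. Y k \<omega> < s} \<le> max AX AY * s powr (2*mY)" .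
  next
    fix k s assume k: "k \<in> {1..K}" and s: "(0::real) < s" "s \<le> 1"
    have "min BX BY * s powr (2*mX) \<le> BX * s powr (2*mX)" by (intro mult_right_mono) auto
    also have "\<dots> \<le> measure M {\<omega>\<in>space M. X k \<omega> < s}"
      using nak_lower[OF P DX[OF k] mX s] unfolding BX_def AX_def .
    finally show "min BX BY * s powr (2*mX) \<le> measure M {\<omega>\<in>space M. X k \<omega> < s}" .
  next
    fix k assume k: "k \<in> {1..K}"
    have "min BX BY \<le> BY" by simp
    also have "\<dots> = BY * 1 powr (2*mY)" by simp
    also have "\<dots> \<le> measure M {\<omega>\<in>space M. Y k \<omega> < 1}"
      using nak_lower[OF P DY[OF k] mY, of 1] unfolding BY_def AY_def by simp
    finally show "min BX BY \<le> measure M {\<omega>\<in>space M. Y k \<omega> < 1}" .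
  qed (use mX mXY AX BX BY in auto)
qed

lemma tau_pow:
  fixes q \<rho> m :: real and K :: nat
  assumes "q > 0" "\<rho> > 0"
  shows "(sqrt (q / \<rho>) powr (2*m))^K = q powr (m * K) * \<rho> powr (- (m * K))"
proof -
  have "sqrt (q / \<rho>) powr (2*m) = (q / \<rho>) powr m"
    using assms by (simp add: powr_half_sqrt[symmetric] powr_powr)
  then have "(sqrt (q / \<rho>) powr (2*m))^K = (q / \<rho>) powr (m * K)"
    using assms by (simp add: powr_power mult.commute)
  also have "\<dots> = q powr (m * K) * \<rho> powr (- (m * K))"
    using assms by (simp add: powr_divide powr_minus_divide)
  finally show ?thesis .
qed



lemma lt_sqrt_iff: fixes s x :: real assumes "0 \<le> s" "0 \<le> x" shows "s < sqrt x \<longleftrightarrow> s\<^sup>2 < x"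
proof -
  have "s = sqrt (s\<^sup>2)" using assms by simp
  then have "s < sqrt x \<longleftrightarrow> sqrt (s\<^sup>2) < sqrt x" by simp
  also have "\<dots> \<longleftrightarrow> s\<^sup>2 < x" by (rule real_sqrt_less_iff)
  finally show ?thesis .
qed

lemma thresh_iff:
  fixes s \<beta> \<rho> \<gamma> :: real
  assumes s: "0 \<le> s" and b: "\<beta> > 0" and r: "\<rho> > 0" and g: "\<gamma> > 0"
  shows "\<rho> * (\<beta> * s)\<^sup>2 < \<gamma> \<longleftrightarrow> s < sqrt (\<gamma> / \<beta>\<^sup>2 / \<rho>)"
proof -
  have "\<rho> * (\<beta> * s)\<^sup>2 < \<gamma> \<longleftrightarrow> s\<^sup>2 * (\<rho> * \<beta>\<^sup>2) < \<gamma>" by (simp add: power_mult_distrib ac_simps)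
  also have "\<dots> \<longleftrightarrow> s\<^sup>2 < \<gamma> / (\<rho> * \<beta>\<^sup>2)" using b r by (simp add: pos_less_divide_eq)
  also have "\<gamma> / (\<rho> * \<beta>\<^sup>2) = \<gamma> / \<beta>\<^sup>2 / \<rho>" by (simp add: field_simps)
  also have "s\<^sup>2 < \<gamma> / \<beta>\<^sup>2 / \<rho> \<longleftrightarrow> s < sqrt (\<gamma> / \<beta>\<^sup>2 / \<rho>)"
    using s b r g by (intro lt_sqrt_iff[symmetric]) auto
  finally show ?thesis .
qed

theorem corollary2:
  fixes M :: "'a measure"
    and G g :: "nat \<Rightarrow> nat \<Rightarrow> 'a \<Rightarrow> complex"
    and th :: "nat \<Rightarrow> real"
    and N K b n :: nat
    and \<beta> mG mg R :: real
  assumes "prob_space M"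
    and "N \<ge> 1" and "K \<ge> 1" and "b \<ge> 2"
    and "0 < \<beta>" and "\<beta> \<le> 1"
    and "mG \<ge> 1/2" and "mg \<ge> 1/2" and "mG \<noteq> mg"
    and "R > 0"
    and "\<And>i. i \<in> {1..N} \<Longrightarrow> 0 \<le> th i \<and> th i < 2 * pi"
    and "prob_space.indep_vars M (\<lambda>_. borel)
           (\<lambda>x. case x of Inl (i, k) \<Rightarrow> G i k | Inr (i, k) \<Rightarrow> g i k)
           (({1..N} \<times> {1..K}) <+> ({1..N} \<times> {1..K}))"
    and "\<And>i k. i \<in> {1..N} \<Longrightarrow> k \<in> {1..K} \<Longrightarrow>
           distributed M lborel (\<lambda>\<omega>. cmod (G i k \<omega>)) (\<lambda>x. ennreal (nakagami_pdf mG x))"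
    and "\<And>i k. i \<in> {1..N} \<Longrightarrow> k \<in> {1..K} \<Longrightarrow>
           distributed M lborel (\<lambda>\<omega>. cmod (g i k \<omega>)) (\<lambda>x. ennreal (nakagami_pdf mg x))"
    and "n \<in> {1..N}"
  shows "((\<lambda>\<rho>. - ln (measure M {\<omega> \<in> space M. \<rho> * (Y_disc \<beta> K b th G g n \<omega>)\<^sup>2 < gamma_OMA N R})
                 / ln \<rho>) \<longlongrightarrow> min mG mg * real K) at_top
       \<and> ((\<lambda>\<rho>. - ln (measure M {\<omega> \<in> space M. \<rho> * (Y_cont \<beta> K G g n \<omega>)\<^sup>2 < gamma_OMA N R})
                 / ln \<rho>) \<longlongrightarrow> min mG mg * real K) at_top"
proof -
  note P = assms(1) and K = assms(3) and b = assms(4) and bet = assms(5) and mG = assms(7)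
    and mg = assms(8) and mne = assms(9) and R = assms(10) and ind = assms(12)
    and DG = assms(13) and Dg = assms(14) and n = assms(15)
  interpret prob_space M by (rule P)
  have rv: "(case i of Inl (i, k) \<Rightarrow> G i k | Inr (i, k) \<Rightarrow> g i k) \<in> borel_measurable M"
    if "i \<in> ({1..N} \<times> {1..K}) <+> ({1..N} \<times> {1..K})" for i
    using ind that unfolding indep_vars_def2 by auto
  have measG: "G n k \<in> borel_measurable M" if "k \<in> {1..K}" for k
  proof -
    have "Inl (n, k) \<in> ({1..N} \<times> {1..K}) <+> ({1..N} \<times> {1..K})" using n that by auto
    from rv[OF this] show ?thesis by simp
  qed
  have measg: "g n k \<in> borel_measurable M" if "k \<in> {1..K}" for k
  proof -
    have "Inr (n, k) \<in> ({1..N} \<times> {1..K}) <+> ({1..N} \<times> {1..K})" using n that by auto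
    from rv[OF this] show ?thesis by simp
  qed
  define XG where "XG = (\<lambda>k \<omega>. cmod (G n k \<omega>))"
  define Xg where "Xg = (\<lambda>k \<omega>. cmod (g n k \<omega>))"
  have mXG: "XG k \<in> borel_measurable M" if "k \<in> {1..K}" for k
    unfolding XG_def using measG[OF that] by measurable
  have mXg: "Xg k \<in> borel_measurable M" if "k \<in> {1..K}" for k
    unfolding Xg_def using measg[OF that] by measurable
  have INDG: "measure M (\<Inter>k\<in>{1..K}. {\<omega>\<in>space M. XG k \<omega> \<in> U k \<and> Xg k \<omega> \<in> V k})
       = (\<Prod>k\<in>{1..K}. measure M {\<omega>\<in>space M. XG k \<omega> \<in> U k} * measure M {\<omega>\<in>space M. Xg k \<omega> \<in> V k})"
    if "\<And>k. U k \<in> sets borel" "\<And>k. V k \<in> sets borel" for U V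
    unfolding XG_def Xg_def by (rule ind_factor[OF P ind n K that])
  have DXG: "distributed M lborel (XG k) (\<lambda>x. ennreal (nakagami_pdf mG x))" if "k \<in> {1..K}" for k
    unfolding XG_def using DG[OF n that] .
  have DXg: "distributed M lborel (Xg k) (\<lambda>x. ennreal (nakagami_pdf mg x))" if "k \<in> {1..K}" for k
    unfolding Xg_def using Dg[OF n that] .
  have nXG: "0 \<le> XG k \<omega>" for k \<omega> unfolding XG_def by simp
  have nXg: "0 \<le> Xg k \<omega>" for k \<omega> unfolding Xg_def by simp
  define m where "m = min mG mg"
  define Sset where "Sset = (\<lambda>t. {\<omega>\<in>space M. (\<Sum>k\<in>{1..K}. cmod (G n k \<omega>) * cmod (g n k \<omega>)) < t})"
  obtain c1 c2 where c: "0 < c1" "0 < c2"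
    and bnd: "\<And>t. 0 < t \<Longrightarrow> t \<le> 1 \<Longrightarrow> c1 * (t powr (2*m))^K \<le> measure M (Sset t) \<and> measure M (Sset t) \<le> c2 * (t powr (2*m))^K"
  proof (cases "mG < mg")
    case True
    have "m = mG" unfolding m_def using True by simp
    from core[OF P K mG True mXG mXg nXG nXg INDG DXG DXg]
    obtain c1 c2 where "0 < c1 \<and> 0 < c2 \<and> (\<forall>t. 0 < t \<longrightarrow> t \<le> 1 \<longrightarrow>
     c1 * (t powr (2*mG))^K \<le> measure M {\<omega>\<in>space M. (\<Sum>k\<in>{1..K}. XG k \<omega> * Xg k \<omega>) < t} \<and>
     measure M {\<omega>\<in>space M. (\<Sum>k\<in>{1..K}. XG k \<omega> * Xg k \<omega>) < t} \<le> c2 * (t powr (2*mG))^K)"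
      by blast
    then show ?thesis using that \<open>m = mG\<close> unfolding Sset_def XG_def Xg_def by auto
  next
    case False
    then have lt: "mg < mG" using mne by simp
    have "m = mg" unfolding m_def using lt by simp
    have INDg: "measure M (\<Inter>k\<in>{1..K}. {\<omega>\<in>space M. Xg k \<omega> \<in> U k \<and> XG k \<omega> \<in> V k})
       = (\<Prod>k\<in>{1..K}. measure M {\<omega>\<in>space M. Xg k \<omega> \<in> U k} * measure M {\<omega>\<in>space M. XG k \<omega> \<in> V k})"
      if "\<And>k. U k \<in> sets borel" "\<And>k. V k \<in> sets borel" for U V
      using INDG[OF that(2,1)] by (simp add: conj_commute mult.commute)
    from core[OF P K mg lt mXg mXG nXg nXG INDg DXg DXG]
    obtain c1 c2 where "0 < c1 \<and> 0 < c2 \<and> (\<forall>t. 0 < t \<longrightarrow> t \<le> 1 \<longrightarrow>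
     c1 * (t powr (2*mg))^K \<le> measure M {\<omega>\<in>space M. (\<Sum>k\<in>{1..K}. Xg k \<omega> * XG k \<omega>) < t} \<and>
     measure M {\<omega>\<in>space M. (\<Sum>k\<in>{1..K}. Xg k \<omega> * XG k \<omega>) < t} \<le> c2 * (t powr (2*mg))^K)"
      by blast
    then show ?thesis using that \<open>m = mg\<close> unfolding Sset_def XG_def Xg_def by (auto simp: mult.commute)
  qed
  have Ssets: "Sset t \<in> sets M" for t
    unfolding Sset_def using measG measg by measurable
  define \<gamma> where "\<gamma> = gamma_OMA N R"
  have "(2::real) powr 0 < 2 powr (real N * R)" using assms(2) R by (intro powr_less_mono) auto
  then have gam: "\<gamma> > 0" unfolding \<gamma>_def gamma_OMA_def by simp
  define q where "q = \<gamma> / \<beta>\<^sup>2"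
  have q: "q > 0" unfolding q_def using gam bet by simp
  have Cset: "{\<omega> \<in> space M. \<rho> * (Y_cont \<beta> K G g n \<omega>)\<^sup>2 < \<gamma>} = Sset (sqrt (q / \<rho>))" if r: "\<rho> > 0" for \<rho>
  proof -
    have e: "\<rho> * (\<beta> * (\<Sum>k\<in>{1..K}. cmod (G n k \<omega>) * cmod (g n k \<omega>)))\<^sup>2 < \<gamma> \<longleftrightarrow>
       (\<Sum>k\<in>{1..K}. cmod (G n k \<omega>) * cmod (g n k \<omega>)) < sqrt (q / \<rho>)" for \<omega>
      unfolding q_def by (rule thresh_iff[OF _ bet r gam]) (simp add: sum_nonneg)
    show ?thesis unfolding Sset_def Y_cont_def using e by blast
  qed
  have Dsub: "Sset (sqrt (q / \<rho>)) \<subseteq> {\<omega> \<in> space M. \<rho> * (Y_disc \<beta> K b th G g n \<omega>)\<^sup>2 < \<gamma>}"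
    and Dsup: "{\<omega> \<in> space M. \<rho> * (Y_disc \<beta> K b th G g n \<omega>)\<^sup>2 < \<gamma>} \<subseteq> Sset (sqrt (2 * q / \<rho>))"
    if r: "\<rho> > 0" for \<rho>
  proof -
    have key: "(\<rho> * (Y_disc \<beta> K b th G g n \<omega>)\<^sup>2 < \<gamma> \<longrightarrow> (\<Sum>k\<in>{1..K}. cmod (G n k \<omega>) * cmod (g n k \<omega>)) < sqrt (2 * q / \<rho>))
         \<and> ((\<Sum>k\<in>{1..K}. cmod (G n k \<omega>) * cmod (g n k \<omega>)) < sqrt (q / \<rho>) \<longrightarrow> \<rho> * (Y_disc \<beta> K b th G g n \<omega>)\<^sup>2 < \<gamma>)" for \<omega>
    proof -
      define s where "s = (\<Sum>k\<in>{1..K}. cmod (G n k \<omega>) * cmod (g n k \<omega>))"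
      define u where "u = cmod (\<Sum>k\<in>{1..K}. complex_of_real (cmod (G n k \<omega>) * cmod (g n k \<omega>)) * cis (phase_err b th G g n k \<omega>))"
      have Yd: "Y_disc \<beta> K b th G g n \<omega> = \<beta> * u" unfolding Y_disc_def u_def ..
      have sw1: "sqrt 2 / 2 * s \<le> u"
        unfolding s_def u_def by (rule sandwich(1)[OF _ phase_err_bound[OF b]]) simp
      have sw2: "u \<le> s"
        unfolding s_def u_def by (rule sandwich(2)[OF _ phase_err_bound[OF b]]) simp
      note sw = sw1 sw2
      have u0: "0 \<le> u" unfolding u_def by simp
      have iff: "\<rho> * (Y_disc \<beta> K b th G g n \<omega>)\<^sup>2 < \<gamma> \<longleftrightarrow> u < sqrt (q / \<rho>)"
        unfolding Yd q_def by (rule thresh_iff[OF u0 bet r gam])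
      have sq: "sqrt (2 * q / \<rho>) = sqrt 2 * sqrt (q / \<rho>)"
        by (simp add: real_sqrt_mult[symmetric])
      have s2: "s = sqrt 2 * (sqrt 2 / 2 * s)" by simp
      show ?thesis
      proof (intro conjI impI)
        assume "\<rho> * (Y_disc \<beta> K b th G g n \<omega>)\<^sup>2 < \<gamma>"
        then have "sqrt 2 / 2 * s < sqrt (q / \<rho>)" using iff sw by simp
        then have "sqrt 2 * (sqrt 2 / 2 * s) < sqrt 2 * sqrt (q / \<rho>)" by (intro mult_strict_left_mono) auto
        then have "s < sqrt 2 * sqrt (q / \<rho>)" using s2 by linarith
        then show "(\<Sum>k\<in>{1..K}. cmod (G n k \<omega>) * cmod (g n k \<omega>)) < sqrt (2 * q / \<rho>)"
          unfolding sq s_def[symmetric] .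
      next
        assume "(\<Sum>k\<in>{1..K}. cmod (G n k \<omega>) * cmod (g n k \<omega>)) < sqrt (q / \<rho>)"
        then show "\<rho> * (Y_disc \<beta> K b th G g n \<omega>)\<^sup>2 < \<gamma>" using iff sw unfolding s_def[symmetric] by simp
      qed
    qed
    show "Sset (sqrt (q / \<rho>)) \<subseteq> {\<omega> \<in> space M. \<rho> * (Y_disc \<beta> K b th G g n \<omega>)\<^sup>2 < \<gamma>}"
      unfolding Sset_def using key by auto
    show "{\<omega> \<in> space M. \<rho> * (Y_disc \<beta> K b th G g n \<omega>)\<^sup>2 < \<gamma>} \<subseteq> Sset (sqrt (2 * q / \<rho>))"
      unfolding Sset_def using key by auto
  qed
  have Dsets: "{\<omega> \<in> space M. \<rho> * (Y_disc \<beta> K b th G g n \<omega>)\<^sup>2 < \<gamma>} \<in> sets M" for \<rho>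
  proof -
    have "Y_disc \<beta> K b th G g n \<in> borel_measurable M"
      by (rule Y_disc_measurable) (auto intro: measG measg)
    then show ?thesis by measurable
  qed
  have tau: "0 < sqrt (x / \<rho>)" "sqrt (x / \<rho>) \<le> 1" if "0 < x" "x \<le> 2 * q" "\<rho> \<ge> 2 * q + 1" for x \<rho>
  proof -
    have r: "\<rho> > 0" using that q by simp
    show "0 < sqrt (x / \<rho>)" using that r by simp
    have "x / \<rho> \<le> 1" using that r by simp
    then show "sqrt (x / \<rho>) \<le> 1" by simp
  qed
  have bnd2: "c1 * q powr (m * K) * \<rho> powr (- (m * K)) \<le> measure M (Sset (sqrt (x / \<rho>)))
      \<and> measure M (Sset (sqrt (x / \<rho>))) \<le> c2 * x powr (m * K) * \<rho> powr (- (m * K))"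
    if "q \<le> x" "x \<le> 2 * q" "\<rho> \<ge> 2 * q + 1" for x \<rho>
  proof -
    have r: "\<rho> > 0" using that q by simp
    have x: "x > 0" using that q by simp
    have "c1 * q powr (m * K) * \<rho> powr (- (m * K)) = c1 * (sqrt (q / \<rho>) powr (2*m))^K"
      using tau_pow[OF q r, of m K] by simp
    also have "\<dots> \<le> measure M (Sset (sqrt (q / \<rho>)))"
      using bnd[OF tau[OF q _ that(3)]] q by simp
    also have "\<dots> \<le> measure M (Sset (sqrt (x / \<rho>)))"
    proof (rule finite_measure_mono[OF _ Ssets])
      have le: "sqrt (q / \<rho>) \<le> sqrt (x / \<rho>)" using that r by (simp add: divide_right_mono)
      show "Sset (sqrt (q / \<rho>)) \<subseteq> Sset (sqrt (x / \<rho>))" unfolding Sset_def using le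
        by (auto simp del: real_sqrt_le_iff)
    qed
    finally have lo: "c1 * q powr (m * K) * \<rho> powr (- (m * K)) \<le> measure M (Sset (sqrt (x / \<rho>)))" .
    have "measure M (Sset (sqrt (x / \<rho>))) \<le> c2 * (sqrt (x / \<rho>) powr (2*m))^K"
      using bnd[OF tau[OF x that(2,3)]] by simp
    also have "\<dots> = c2 * x powr (m * K) * \<rho> powr (- (m * K))"
      using tau_pow[OF x r, of m K] by simp
    finally show ?thesis using lo by simp
  qed
  have lim_disc: "((\<lambda>\<rho>. - ln (measure M {\<omega> \<in> space M. \<rho> * (Y_disc \<beta> K b th G g n \<omega>)\<^sup>2 < \<gamma>}) / ln \<rho>)
      \<longlongrightarrow> m * real K) at_top"
  proof (rule diversity_limit[where La = "c1 * q powr (m * K)" and Lb = "c2 * (2 * q) powr (m * K)"])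
    show "0 < c1 * q powr (m * K)" "0 < c2 * (2 * q) powr (m * K)" using c q by auto
    show "eventually (\<lambda>\<rho>. c1 * q powr (m * K) * \<rho> powr (- (m * K)) \<le> measure M {\<omega> \<in> space M. \<rho> * (Y_disc \<beta> K b th G g n \<omega>)\<^sup>2 < \<gamma>}
       \<and> measure M {\<omega> \<in> space M. \<rho> * (Y_disc \<beta> K b th G g n \<omega>)\<^sup>2 < \<gamma>} \<le> c2 * (2 * q) powr (m * K) * \<rho> powr (- (m * K))) at_top"
      using eventually_ge_at_top[of "2 * q + 1"]
    proof (rule eventually_mono)
      fix \<rho> :: real assume r1: "2 * q + 1 \<le> \<rho>"
      then have r: "\<rho> > 0" using q by simp
      have "c1 * q powr (m * K) * \<rho> powr (- (m * K)) \<le> measure M (Sset (sqrt (q / \<rho>)))"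
        using bnd2[of q \<rho>] r1 q by simp
      also have "\<dots> \<le> measure M {\<omega> \<in> space M. \<rho> * (Y_disc \<beta> K b th G g n \<omega>)\<^sup>2 < \<gamma>}"
        by (rule finite_measure_mono[OF Dsub[OF r] Dsets])
      finally have lo: "c1 * q powr (m * K) * \<rho> powr (- (m * K)) \<le> measure M {\<omega> \<in> space M. \<rho> * (Y_disc \<beta> K b th G g n \<omega>)\<^sup>2 < \<gamma>}" .
      have "measure M {\<omega> \<in> space M. \<rho> * (Y_disc \<beta> K b th G g n \<omega>)\<^sup>2 < \<gamma>} \<le> measure M (Sset (sqrt (2 * q / \<rho>)))"
        by (rule finite_measure_mono[OF Dsup[OF r] Ssets])
      also have "\<dots> \<le> c2 * (2 * q) powr (m * K) * \<rho> powr (- (m * K))"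
        using bnd2[of "2 * q" \<rho>] r1 q by simp
      finally show "c1 * q powr (m * K) * \<rho> powr (- (m * K)) \<le> measure M {\<omega> \<in> space M. \<rho> * (Y_disc \<beta> K b th G g n \<omega>)\<^sup>2 < \<gamma>}
       \<and> measure M {\<omega> \<in> space M. \<rho> * (Y_disc \<beta> K b th G g n \<omega>)\<^sup>2 < \<gamma>} \<le> c2 * (2 * q) powr (m * K) * \<rho> powr (- (m * K))"
        using lo by simp
    qed
  qed
  have lim_cont: "((\<lambda>\<rho>. - ln (measure M {\<omega> \<in> space M. \<rho> * (Y_cont \<beta> K G g n \<omega>)\<^sup>2 < \<gamma>}) / ln \<rho>)
      \<longlongrightarrow> m * real K) at_top"
  proof (rule diversity_limit[where La = "c1 * q powr (m * K)" and Lb = "c2 * q powr (m * K)"])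
    show "0 < c1 * q powr (m * K)" "0 < c2 * q powr (m * K)" using c q by auto
    show "eventually (\<lambda>\<rho>. c1 * q powr (m * K) * \<rho> powr (- (m * K)) \<le> measure M {\<omega> \<in> space M. \<rho> * (Y_cont \<beta> K G g n \<omega>)\<^sup>2 < \<gamma>}
       \<and> measure M {\<omega> \<in> space M. \<rho> * (Y_cont \<beta> K G g n \<omega>)\<^sup>2 < \<gamma>} \<le> c2 * q powr (m * K) * \<rho> powr (- (m * K))) at_top"
      using eventually_ge_at_top[of "2 * q + 1"]
    proof (rule eventually_mono)
      fix \<rho> :: real assume r1: "2 * q + 1 \<le> \<rho>"
      then have r: "\<rho> > 0" using q by simp
      show "c1 * q powr (m * K) * \<rho> powr (- (m * K)) \<le> measure M {\<omega> \<in> space M. \<rho> * (Y_cont \<beta> K G g n \<omega>)\<^sup>2 < \<gamma>}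
       \<and> measure M {\<omega> \<in> space M. \<rho> * (Y_cont \<beta> K G g n \<omega>)\<^sup>2 < \<gamma>} \<le> c2 * q powr (m * K) * \<rho> powr (- (m * K))"
        unfolding Cset[OF r] using bnd2[of q \<rho>] r1 q by simp
    qed
  qed
  show ?thesis using lim_disc lim_cont unfolding \<gamma>_def m_def by simp
qed


end
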